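(* Let $n\ge p\ge1$, $U\in St(n,p)$, $\Delta\in T_USt(n,p)$, and let $\gamma(t)=\mathrm{Exp}_U(t\Delta)$ be the geodesic of $St(n,p)$ under the Euclidean metric, regarded as a curve in $\mathbb R^{n\times p}$. Then there exist $m\in\mathbb N$, real numbers $a_1,\dots,a_m,b_1,\dots,b_m$, a matrix $C_0\in\mathbb R^{n\times p}$ and matrices $E_1,\dots,E_{2m}\in\mathbb R^{n\times p}$ that are orthonormal with respect to $\langle X,Y\rangle=\operatorname{tr}(X^TY)$ such that for all $t\in\mathbb R$ $$\gamma(t)=C_0+\sum_{i=1}^m a_i\big(\cos(b_it)\,E_{2i-1}+\sin(b_it)\,E_{2i}\big).$$ Equivalently, up to a Euclidean isometry, $\gamma(t)=(a_1\cos(b_1t),a_1\sin(b_1t),\dots,a_m\cos(b_mt),a_m\sin(b_mt))^T$ (padded with zeros).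
   Context: $St(n,p)=\{U\in\mathbb R^{n\times p}: U^TU=I_p\}$ with $T_USt(n,p)=\{\Delta: U^T\Delta=-\Delta^TU\}$. The Euclidean metric is the restriction of $\operatorname{tr}(X^TY)$ to tangent spaces, and $\mathrm{Exp}_U$ is its Riemannian exponential map; explicitly $\mathrm{Exp}_U(t\Delta)=\begin{pmatrix}U&Q\end{pmatrix}\exp_m\!\left(t\begin{pmatrix}2A&-B^T\\ B&0\end{pmatrix}\right)\begin{pmatrix}I_p\\0\end{pmatrix}\exp_m(-tA)$ with $A=U^T\Delta$, $QB=(I-UU^T)\Delta$, $Q$ with orthonormal columns orthogonal to $U$, $\exp_m$ the matrix exponential. *)

theory Defs
  imports "HOL-Analysis.Analysis"
begin

text \<open>n x p real matrices are represented as real^'p^'n (rows indexed by 'n, columns by 'p).\<close>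

definition frob_inner :: "real^'p^'n \<Rightarrow> real^'p^'n \<Rightarrow> real" where
  "frob_inner X Y = trace (transpose X ** Y)"

definition stiefel :: "(real^'p^'n) set" where
  "stiefel = {U. transpose U ** U = mat 1}"

definition stiefel_tangent :: "real^'p^'n \<Rightarrow> (real^'p^'n) set" where
  "stiefel_tangent U = {D. transpose U ** D = - (transpose D ** U)}"

definition euclid_geodesic :: "real^'p^'n \<Rightarrow> real^'p^'n \<Rightarrow> (real \<Rightarrow> real^'p^'n) \<Rightarrow> bool" where
  "euclid_geodesic U V \<gamma> \<longleftrightarrow>
     (\<exists>\<gamma>' \<gamma>''.
        (\<forall>t. (\<gamma> has_vector_derivative \<gamma>' t) (at t)) \<and>
        (\<forall>t. (\<gamma>' has_vector_derivative \<gamma>'' t) (at t)) \<and>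
        (\<forall>t. \<gamma> t \<in> stiefel) \<and>
        (\<forall>t. \<forall>D \<in> stiefel_tangent (\<gamma> t). frob_inner (\<gamma>'' t) D = 0) \<and>
        \<gamma> 0 = U \<and> \<gamma>' 0 = V)"

definition stiefel_Exp :: "real^'p^'n \<Rightarrow> real^'p^'n \<Rightarrow> real^'p^'n" where
  "stiefel_Exp U V = (THE \<gamma>. euclid_geodesic U V \<gamma>) 1"

end

theory Submission
  imports Defs
begin

lemma mm_nth: "(A ** B) $ i $ j = (\<Sum>k\<in>UNIV. A$i$k * B$k$j)"
  by (simp add: matrix_matrix_mult_def)
lemma tr_nth: "transpose A $ i $ j = A $ j $ i"
  by (simp add: transpose_def)

lemma mm_add_r: "((A::real^'n^'m) + B) ** C = A ** C + B ** C"
  by (simp add: vec_eq_iff mm_nth algebra_simps sum.distrib)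
lemma mm_add_l: "(A::real^'n^'m) ** (B + C) = A ** B + A ** C"
  by (simp add: vec_eq_iff mm_nth algebra_simps sum.distrib)
lemma mm_diff_r: "((A::real^'n^'m) - B) ** C = A ** C - B ** C"
  by (simp add: vec_eq_iff mm_nth algebra_simps sum_subtractf)
lemma mm_diff_l: "(A::real^'n^'m) ** (B - C) = A ** B - A ** C"
  by (simp add: vec_eq_iff mm_nth algebra_simps sum_subtractf)
lemma mm_neg_r: "(- (A::real^'n^'m)) ** C = - (A ** C)"
  by (simp add: vec_eq_iff mm_nth sum_negf)
lemma mm_neg_l: "(A::real^'n^'m) ** (- C) = - (A ** C)"
  by (simp add: vec_eq_iff mm_nth sum_negf)
lemma mm_scale_r: "(c *\<^sub>R (A::real^'n^'m)) ** C = c *\<^sub>R (A ** C)"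
  by (simp add: vec_eq_iff mm_nth sum_distrib_left mult.assoc)
lemma mm_scale_l: "(A::real^'n^'m) ** (c *\<^sub>R C) = c *\<^sub>R (A ** C)"
  by (simp add: vec_eq_iff mm_nth sum_distrib_left algebra_simps)
lemma tr_add: "transpose ((A::real^'n^'m) + B) = transpose A + transpose B"
  by (simp add: vec_eq_iff tr_nth)
lemma tr_diff: "transpose ((A::real^'n^'m) - B) = transpose A - transpose B"
  by (simp add: vec_eq_iff tr_nth)
lemma tr_neg: "transpose (- (A::real^'n^'m)) = - transpose A"
  by (simp add: vec_eq_iff tr_nth)
lemma tr_zero: "transpose (0::real^'n^'m) = 0"
  by (simp add: vec_eq_iff tr_nth)
lemma tr_scale: "transpose (c *\<^sub>R (A::real^'n^'m)) = c *\<^sub>R transpose A"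
  by (simp add: vec_eq_iff tr_nth)
lemma tr_mm: "transpose ((A::real^'n^'m) ** B) = transpose B ** transpose A"
  by (rule matrix_transpose_mul)

lemma inner_mat: "(X::real^'p^'n) \<bullet> Y = (\<Sum>i\<in>UNIV. \<Sum>j\<in>UNIV. X$i$j * Y$i$j)"
  by (simp add: inner_vec_def)

lemma frob_inner_eq: "frob_inner (X::real^'p^'n) Y = X \<bullet> Y"
  unfolding frob_inner_def trace_def inner_mat
  by (simp add: mm_nth tr_nth sum.swap[of _ "UNIV::'p set"])

lemma inner_mm_left: "((A::real^'n^'m) ** X) \<bullet> (Y::real^'p^'m) = X \<bullet> (transpose A ** Y)"
proof -
  have "((A::real^'n^'m) ** X) \<bullet> (Y::real^'p^'m) = (\<Sum>i\<in>UNIV. \<Sum>j\<in>UNIV. \<Sum>k\<in>UNIV. A$i$k * X$k$j * Y$i$j)"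
    unfolding inner_mat mm_nth by (simp add: sum_distrib_right)
  also have "\<dots> = (\<Sum>i\<in>UNIV. \<Sum>k\<in>UNIV. \<Sum>j\<in>UNIV. A$i$k * X$k$j * Y$i$j)"
    by (rule sum.cong[OF refl], rule sum.swap)
  also have "\<dots> = (\<Sum>k\<in>UNIV. \<Sum>i\<in>UNIV. \<Sum>j\<in>UNIV. A$i$k * X$k$j * Y$i$j)"
    by (rule sum.swap)
  also have "\<dots> = (\<Sum>k\<in>UNIV. \<Sum>j\<in>UNIV. \<Sum>i\<in>UNIV. A$i$k * X$k$j * Y$i$j)"
    by (rule sum.cong[OF refl], rule sum.swap)
  also have "\<dots> = X \<bullet> (transpose A ** Y)"
    unfolding inner_mat mm_nth tr_nth by (simp add: sum_distrib_left mult.commute mult.left_commute)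
  finally show ?thesis .
qed

lemma inner_mm_right: "((X::real^'n^'m) ** B) \<bullet> (Y::real^'p^'m) = X \<bullet> (Y ** transpose B)"
proof -
  have "((X::real^'n^'m) ** B) \<bullet> (Y::real^'p^'m) = (\<Sum>i\<in>UNIV. \<Sum>j\<in>UNIV. \<Sum>k\<in>UNIV. X$i$k * B$k$j * Y$i$j)"
    unfolding inner_mat mm_nth by (simp add: sum_distrib_right)
  also have "\<dots> = (\<Sum>i\<in>UNIV. \<Sum>k\<in>UNIV. \<Sum>j\<in>UNIV. X$i$k * B$k$j * Y$i$j)"
    by (rule sum.cong[OF refl], rule sum.swap)
  also have "\<dots> = X \<bullet> (Y ** transpose B)"
    unfolding inner_mat mm_nth tr_nth by (simp add: sum_distrib_left mult.commute mult.left_commute)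
  finally show ?thesis .
qed

lemma inner_tr: "transpose (X::real^'p^'n) \<bullet> transpose Y = X \<bullet> Y"
  unfolding inner_mat tr_nth by (rule sum.swap)

lemma norm_tr: "norm (transpose (X::real^'p^'n)) = norm X"
  by (simp add: norm_eq_sqrt_inner inner_tr)

lemma mm_entry_inner: "(A ** B) $ i $ j = (A$i) \<bullet> column j (B::real^'p^'n)"
  by (simp add: mm_nth inner_vec_def column_def)

lemma norm_mm: "norm ((A::real^'n^'m) ** (B::real^'p^'n)) \<le> norm A * norm B"
proof -
  have "(norm (A ** B))^2 = (\<Sum>i\<in>UNIV. \<Sum>j\<in>UNIV. ((A$i) \<bullet> column j B)^2)"
    unfolding power2_norm_eq_inner inner_mat by (simp add: mm_entry_inner power2_eq_square)
  also have "\<dots> \<le> (\<Sum>i\<in>UNIV. \<Sum>j\<in>UNIV. (norm (A$i))^2 * (norm (column j B))^2)"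
  proof (intro sum_mono)
    fix i j
    have "\<bar>(A$i) \<bullet> column j B\<bar> \<le> norm (A$i) * norm (column j B)"
      by (rule Cauchy_Schwarz_ineq2)
    then have "\<bar>(A$i) \<bullet> column j B\<bar>^2 \<le> (norm (A$i) * norm (column j B))^2"
      by (rule power_mono) simp
    then show "((A$i) \<bullet> column j B)^2 \<le> (norm (A$i))^2 * (norm (column j B))^2"
      by (simp add: power_mult_distrib)
  qed
  also have "\<dots> = (\<Sum>i\<in>UNIV. (norm (A$i))^2) * (\<Sum>j\<in>UNIV. (norm (column j B))^2)"
    by (simp add: sum_product)
  also have "(\<Sum>i\<in>UNIV. (norm (A$i))^2) = (norm A)^2"
    by (simp add: power2_norm_eq_inner inner_vec_def)
  also have "(\<Sum>j\<in>UNIV. (norm (column j B))^2) = (norm B)^2"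
    by (simp add: power2_norm_eq_inner inner_vec_def column_def sum.swap[of _ "UNIV::'p set"])
  finally have "(norm (A ** B))^2 \<le> (norm A * norm B)^2" by (simp add: power_mult_distrib)
  then show ?thesis
    by (meson norm_ge_zero power2_le_imp_le zero_le_mult_iff)
qed

lemma bb_mm: "bounded_bilinear ((**) :: real^'n^'m \<Rightarrow> real^'p^'n \<Rightarrow> real^'p^'m)"
  apply (rule bounded_bilinear.intro)
  apply (simp_all add: mm_add_r mm_add_l mm_scale_r mm_scale_l)
  by (metis mult.commute mult_1 norm_mm)

lemma bl_tr: "bounded_linear (transpose :: real^'p^'n \<Rightarrow> real^'n^'p)"
  apply (rule bounded_linear_intro[where K=1])
  by (simp_all add: tr_add tr_scale norm_tr)

lemma skew_ode_unique:
  fixes X Y :: "real \<Rightarrow> 'a::real_inner"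
  assumes L: "bounded_linear L" and sk: "\<And>x. L x \<bullet> x = 0"
  and dX: "\<And>t. (X has_vector_derivative L (X t)) (at t)"
  and dY: "\<And>t. (Y has_vector_derivative L (Y t)) (at t)"
  and X0: "X 0 = Y 0"
  shows "X t = Y t"
proof -
  define D where "D s = X s - Y s" for s
  have dD: "(D has_vector_derivative L (D s)) (at s)" for s
    unfolding D_def using has_vector_derivative_diff[OF dX dY]
    by (simp add: linear_diff[OF bounded_linear.linear[OF L]])
  have "((\<lambda>s. D s \<bullet> D s) has_vector_derivative (D s \<bullet> L (D s) + L (D s) \<bullet> D s)) (at s)" for s
    using bounded_bilinear.has_vector_derivative[OF bounded_bilinear_inner dD dD] .
  then have "DERIV (\<lambda>s. D s \<bullet> D s) s :> 0" for s
    using sk by (simp add: has_real_derivative_iff_has_vector_derivative inner_commute)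
  then have "D t \<bullet> D t = D 0 \<bullet> D 0"
    by (intro DERIV_isconst_all) auto
  also have "\<dots> = 0" using X0 by (simp add: D_def)
  finally show ?thesis by (simp add: D_def)
qed

lemma quad_zero:
  fixes c d :: real
  assumes "\<And>s. 2 * s * c \<le> s^2*d"
  shows "c = 0"
proof (rule ccontr)
  assume nz: "c \<noteq> 0"
  define D where "D = \<bar>d\<bar> + 1"
  have Dp: "D > 0" by (simp add: D_def)
  have "2*(c/D)*c \<le> (c/D)^2*d" by (rule assms)
  then have "2*c^2/D \<le> c^2*d/D^2" by (simp add: power2_eq_square field_simps)
  then have "2*c^2*D \<le> c^2*d" using Dp by (simp add: field_simps power2_eq_square)
  moreover have "c^2 > 0" using nz by simp
  moreover have "2*D > d" by (simp add: D_def)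
  ultimately have "c^2 * d < c^2 * (2*D)" "2*c^2*D = c^2 * (2*D)"
    by (simp_all add: mult_strict_left_mono)
  with \<open>2*c^2*D \<le> c^2*d\<close> show False by linarith
qed

lemma skew_decomp:
  fixes L :: "'a::euclidean_space \<Rightarrow> 'a"
  assumes lin: "linear L" and sk: "\<And>x y. L x \<bullet> y = - (x \<bullet> L y)"
  shows "subspace S \<Longrightarrow> L ` S \<subseteq> S \<Longrightarrow> x0 \<in> S \<Longrightarrow>
    \<exists>(m::nat) a b C0 E1 E2. C0 \<in> S \<and> L C0 = 0 \<and>
      (\<forall>i<m. E1 i \<in> S \<and> E2 i \<in> S \<and> L (E1 i) = b i *\<^sub>R E2 i \<and> L (E2 i) = - (b i *\<^sub>R E1 i)) \<and>
      (\<forall>i<m. \<forall>j<m. E1 i \<bullet> E1 j = (if i = j then 1 else 0) \<and> E2 i \<bullet> E2 j = (if i = j then 1 else 0)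
          \<and> E1 i \<bullet> E2 j = 0) \<and>
      x0 = C0 + (\<Sum>i<m. a i *\<^sub>R E1 i)"
proof (induction "dim S" arbitrary: S x0 rule: less_induct)
  case less
  note S = less.prems(1) and inv = less.prems(2) and x0S = less.prems(3)
  have bl: "bounded_linear L" using lin by (simp add: linear_conv_bounded_linear)
  show ?case
  proof (cases "\<forall>x\<in>S. L x = 0")
    case True
    show ?thesis
      apply (rule exI[where x="0::nat"])
      apply (rule exI)
      apply (rule exI)
      apply (rule exI[where x=x0])
      using True x0S by auto
  next
    case False
    then obtain z where zS: "z \<in> S" and Lz: "L z \<noteq> 0" by auto
    have z0: "z \<noteq> 0" using Lz linear_0[OF lin] by auto
    define K where "K = S \<inter> sphere 0 1"
    have cK: "compact K" unfolding K_def
      by (metis Int_commute closed_subspace[OF S] compact_Int_closed compact_sphere)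
    have "z /\<^sub>R norm z \<in> K" using z0 zS S by (simp add: K_def subspace_scale)
    then have Kne: "K \<noteq> {}" by auto
    have cont: "continuous_on K (\<lambda>x. L x \<bullet> L x)"
      by (intro continuous_intros bounded_linear.continuous_on[OF bl])
    obtain x where xK: "x \<in> K" and xmax: "\<And>y. y \<in> K \<Longrightarrow> L y \<bullet> L y \<le> L x \<bullet> L x"
      using continuous_attains_sup[OF cK Kne cont] by blast
    define \<mu> where "\<mu> = L x \<bullet> L x"
    have xS: "x \<in> S" and nx: "norm x = 1" using xK by (auto simp: K_def)
    have hom: "L w \<bullet> L w \<le> \<mu> * (w \<bullet> w)" if wS: "w \<in> S" for w
    proof (cases "w = 0")
      case True then show ?thesis using linear_0[OF lin] by simp
    next
      case False
      have "w /\<^sub>R norm w \<in> K" using False wS S by (simp add: K_def subspace_scale)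
      then have "L (w /\<^sub>R norm w) \<bullet> L (w /\<^sub>R norm w) \<le> \<mu>" unfolding \<mu>_def by (rule xmax)
      then have "inverse (norm w) * (inverse (norm w) * (L w \<bullet> L w)) \<le> \<mu>"
        by (simp add: linear_scale[OF lin])
      moreover have np: "norm w > 0" using False by simp
      ultimately have "L w \<bullet> L w \<le> \<mu> * (norm w * norm w)"
        by (simp add: field_simps)
      moreover have "w \<bullet> w = norm w * norm w" by (simp add: power2_norm_eq_inner[symmetric] power2_eq_square)
      ultimately show ?thesis by simp
    qed
    have "L (z /\<^sub>R norm z) \<bullet> L (z /\<^sub>R norm z) > 0" using Lz z0
      by (simp add: linear_scale[OF lin])
    then have mupos: "\<mu> > 0"
      using xmax[OF \<open>z /\<^sub>R norm z \<in> K\<close>] unfolding \<mu>_def by linarith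
    have xx: "x \<bullet> x = 1" using nx by (simp add: norm_eq_sqrt_inner)
    have LLx: "L (L x) = - (\<mu> *\<^sub>R x)"
    proof -
      have orth: "(L (L x) + \<mu> *\<^sub>R x) \<bullet> y = 0" if yS: "y \<in> S" for y
      proof -
        define c where "c = L x \<bullet> L y - \<mu> * (x \<bullet> y)"
        define d where "d = \<mu> * (y \<bullet> y) - L y \<bullet> L y"
        have "2 * s * c \<le> s^2*d" for s
        proof -
          have "x + s *\<^sub>R y \<in> S" using xS yS S by (simp add: subspace_add subspace_scale)
          from hom[OF this] have "L (x + s *\<^sub>R y) \<bullet> L (x + s *\<^sub>R y) \<le> \<mu> * ((x + s *\<^sub>R y) \<bullet> (x + s *\<^sub>R y))" .
          then have "L x \<bullet> L x + 2 * s * (L x \<bullet> L y) + s^2*(L y \<bullet> L y) \<le> \<mu> * (x \<bullet> x + 2 * s * (x \<bullet> y) + s^2*(y \<bullet> y))"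
            by (simp add: linear_add[OF lin] linear_scale[OF lin] inner_add_left inner_add_right
                inner_commute[of "L y" "L x"] inner_commute[of y x] power2_eq_square algebra_simps)
          then show ?thesis unfolding c_def d_def \<mu>_def[symmetric] xx
            by (simp add: algebra_simps)
        qed
        then have "c = 0" by (rule quad_zero)
        moreover have "L x \<bullet> L y = - (L (L x) \<bullet> y)" using sk[of "L x" y] by simp
        ultimately show ?thesis unfolding c_def by (simp add: inner_add_left)
      qed
      have "L (L x) + \<mu> *\<^sub>R x \<in> S" using xS inv S by (auto intro!: subspace_add subspace_scale)
      from orth[OF this] show ?thesis by (simp add: eq_neg_iff_add_eq_0)
    qed
    define b0 where "b0 = sqrt \<mu>"
    have b0p: "b0 > 0" using mupos by (simp add: b0_def)
    have b0sq: "b0 * b0 = \<mu>" using mupos by (simp add: b0_def)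
    define y where "y = (1/b0) *\<^sub>R L x"
    have yS: "y \<in> S" using xS inv S by (auto simp: y_def intro!: subspace_scale)
    have Lx: "L x = b0 *\<^sub>R y" using b0p by (simp add: y_def)
    have Ly: "L y = - (b0 *\<^sub>R x)"
      using b0p b0sq mupos by (simp add: y_def linear_scale[OF lin] LLx field_simps)
    have yy: "y \<bullet> y = 1"
      using b0p b0sq mupos by (simp add: y_def \<mu>_def[symmetric] field_simps)
    have xy: "x \<bullet> y = 0"
    proof -
      have "L x \<bullet> x = 0" using sk[of x x] by (simp add: inner_commute)
      then show ?thesis by (simp add: y_def inner_commute)
    qed
    define S' where "S' = {w \<in> S. w \<bullet> x = 0 \<and> w \<bullet> y = 0}"
    have S'sub: "subspace S'" using S unfolding S'_def subspace_def
      by (auto simp: inner_add_left)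
    have S'inv: "L ` S' \<subseteq> S'"
    proof
      fix v assume "v \<in> L ` S'"
      then obtain w where w: "w \<in> S'" "v = L w" by auto
      have "L w \<bullet> x = 0" using sk[of w x] w(1) by (simp add: S'_def Lx)
      moreover have "L w \<bullet> y = 0" using sk[of w y] w(1) by (simp add: S'_def Ly)
      ultimately show "v \<in> S'" using w inv by (auto simp: S'_def)
    qed
    have "dim S' < dim S"
    proof -
      have "span S' \<subset> span S"
      proof -
        have "S' \<subseteq> S" by (auto simp: S'_def)
        moreover have "x \<notin> S'" using xx by (simp add: S'_def)
        moreover have "span S' = S'" using S'sub by (rule span_eq_iff[THEN iffD2])
        moreover have "span S = S" using S by (rule span_eq_iff[THEN iffD2])
        ultimately show ?thesis using xS by (metis psubsetI)
      qed
      then show ?thesis by (rule dim_psubset)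
    qed
    define \<alpha> where "\<alpha> = x0 \<bullet> x"
    define \<beta> where "\<beta> = x0 \<bullet> y"
    define x1 where "x1 = x0 - \<alpha> *\<^sub>R x - \<beta> *\<^sub>R y"
    have x1S: "x1 \<in> S'"
      using x0S xS yS S xx yy xy unfolding S'_def x1_def
      by (simp add: subspace_diff subspace_scale inner_diff_left inner_commute[of y x] \<alpha>_def \<beta>_def)
    obtain m :: nat and a b C0 E1 E2 where C0: "C0 \<in> S'" "L C0 = 0" and
      E: "\<forall>i<m. E1 i \<in> S' \<and> E2 i \<in> S' \<and> L (E1 i) = b i *\<^sub>R E2 i \<and> L (E2 i) = - (b i *\<^sub>R E1 i)" and
      ON: "\<forall>i<m. \<forall>j<m. E1 i \<bullet> E1 j = (if i = j then 1 else 0) \<and> E2 i \<bullet> E2 j = (if i = j then 1 else 0)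
          \<and> E1 i \<bullet> E2 j = 0" and
      x1eq: "x1 = C0 + (\<Sum>i<m. a i *\<^sub>R E1 i)"
      using less.hyps[OF \<open>dim S' < dim S\<close> S'sub S'inv x1S] by (elim exE conjE) (rule that; assumption)
    define r where "r = sqrt (\<alpha>^2 + \<beta>^2)"
    define F1 where "F1 = (if r = 0 then x else (1/r) *\<^sub>R (\<alpha> *\<^sub>R x + \<beta> *\<^sub>R y))"
    define F2 where "F2 = (if r = 0 then y else (1/r) *\<^sub>R (\<alpha> *\<^sub>R y - \<beta> *\<^sub>R x))"
    have rr: "r * r = \<alpha>^2 + \<beta>^2" by (simp add: r_def)
    have r0: "r = 0 \<longleftrightarrow> \<alpha> = 0 \<and> \<beta> = 0"
      by (simp add: r_def add_nonneg_eq_0_iff)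
    have F1S: "F1 \<in> S" and F2S: "F2 \<in> S" using xS yS S
      by (auto simp: F1_def F2_def intro!: subspace_add subspace_scale subspace_diff)
    have LF1: "L F1 = b0 *\<^sub>R F2" and LF2: "L F2 = - (b0 *\<^sub>R F1)"
      unfolding F1_def F2_def
      by (simp_all add: linear_add[OF lin] linear_scale[OF lin] linear_diff[OF lin] linear_neg[OF lin] Lx Ly scaleR_add_right
          scaleR_right_diff_distrib) (simp_all add: algebra_simps)
    have q1: "(\<alpha> *\<^sub>R x + \<beta> *\<^sub>R y) \<bullet> (\<alpha> *\<^sub>R x + \<beta> *\<^sub>R y) = \<alpha>^2 + \<beta>^2"
      using xx yy xy by (simp add: inner_add_left inner_add_right inner_commute[of y x] power2_eq_square)
    have q2: "(\<alpha> *\<^sub>R y - \<beta> *\<^sub>R x) \<bullet> (\<alpha> *\<^sub>R y - \<beta> *\<^sub>R x) = \<alpha>^2 + \<beta>^2"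
      using xx yy xy by (simp add: inner_add_left inner_add_right inner_diff_left inner_diff_right inner_commute[of y x] power2_eq_square)
    have q3: "(\<alpha> *\<^sub>R x + \<beta> *\<^sub>R y) \<bullet> (\<alpha> *\<^sub>R y - \<beta> *\<^sub>R x) = 0"
      using xx yy xy by (simp add: inner_add_left inner_add_right inner_diff_left inner_diff_right inner_commute[of y x])
    have F11: "F1 \<bullet> F1 = 1" and F22: "F2 \<bullet> F2 = 1" and F12: "F1 \<bullet> F2 = 0" and F21: "F2 \<bullet> F1 = 0"
    proof -
      have "F1 \<bullet> F1 = 1 \<and> F2 \<bullet> F2 = 1 \<and> F1 \<bullet> F2 = 0"
      proof (cases "r = 0")
        case True then show ?thesis using xx yy xy by (simp add: F1_def F2_def)
      next
        case False
        have "F1 \<bullet> F1 = (\<alpha>^2 + \<beta>^2) / (r * r)" using False by (simp add: F1_def q1)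
        moreover have "F2 \<bullet> F2 = (\<alpha>^2 + \<beta>^2) / (r * r)" using False by (simp add: F2_def q2)
        moreover have "F1 \<bullet> F2 = 0" using False by (simp add: F1_def F2_def q3)
        ultimately show ?thesis using False by (simp add: rr[symmetric])
      qed
      then show "F1 \<bullet> F1 = 1" "F2 \<bullet> F2 = 1" "F1 \<bullet> F2 = 0" "F2 \<bullet> F1 = 0"
        by (auto simp: inner_commute)
    qed
    have rF1: "r *\<^sub>R F1 = \<alpha> *\<^sub>R x + \<beta> *\<^sub>R y" using r0 by (auto simp: F1_def)
    have orthS': "w \<bullet> F1 = 0 \<and> w \<bullet> F2 = 0 \<and> F1 \<bullet> w = 0 \<and> F2 \<bullet> w = 0" if "w \<in> S'" for w
      using that by (simp add: S'_def F1_def F2_def inner_add_right inner_add_left inner_diff_left inner_diff_right inner_commute[of x w] inner_commute[of y w])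
    have S'S: "S' \<subseteq> S" by (auto simp: S'_def)
    show ?thesis
    proof (rule exI[where x="Suc m"], rule exI[where x="a(m := r)"], rule exI[where x="b(m := b0)"], rule exI[where x=C0],
        rule exI[where x="E1(m := F1)"], rule exI[where x="E2(m := F2)"], intro conjI)
      show "C0 \<in> S" using C0 S'S by auto
      show "L C0 = 0" by (rule C0)
      show "\<forall>i<Suc m. (E1(m := F1)) i \<in> S \<and> (E2(m := F2)) i \<in> S \<and>
          L ((E1(m := F1)) i) = (b(m := b0)) i *\<^sub>R (E2(m := F2)) i \<and>
          L ((E2(m := F2)) i) = - ((b(m := b0)) i *\<^sub>R (E1(m := F1)) i)"
      proof (intro allI impI)
        fix i assume i: "i < Suc m"
        then consider "i < m" | "i = m" using less_Suc_eq by blast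
        then show "(E1(m := F1)) i \<in> S \<and> (E2(m := F2)) i \<in> S \<and>
          L ((E1(m := F1)) i) = (b(m := b0)) i *\<^sub>R (E2(m := F2)) i \<and>
          L ((E2(m := F2)) i) = - ((b(m := b0)) i *\<^sub>R (E1(m := F1)) i)"
        proof cases
          case 1 then show ?thesis using E S'S by auto
        next
          case 2 then show ?thesis using F1S F2S LF1 LF2 by simp
        qed
      qed
      show "\<forall>i<Suc m. \<forall>j<Suc m. (E1(m := F1)) i \<bullet> (E1(m := F1)) j = (if i = j then 1 else 0) \<and>
          (E2(m := F2)) i \<bullet> (E2(m := F2)) j = (if i = j then 1 else 0) \<and>
          (E1(m := F1)) i \<bullet> (E2(m := F2)) j = 0"
      proof (intro allI impI)
        fix i j assume i: "i < Suc m" and j: "j < Suc m"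
        consider "i < m" "j < m" | "i = m" "j < m" | "i < m" "j = m" | "i = m" "j = m"
          using i j less_Suc_eq by blast
        then show "(E1(m := F1)) i \<bullet> (E1(m := F1)) j = (if i = j then 1 else 0) \<and>
          (E2(m := F2)) i \<bullet> (E2(m := F2)) j = (if i = j then 1 else 0) \<and>
          (E1(m := F1)) i \<bullet> (E2(m := F2)) j = 0"
        proof cases
          case 1 then show ?thesis using ON by simp
        next
          case 2 then show ?thesis using orthS' E by simp
        next
          case 3 then show ?thesis using orthS' E by simp
        next
          case 4 then show ?thesis using F11 F22 F12 by simp
        qed
      qed
      have "(\<Sum>i<Suc m. (a(m := r)) i *\<^sub>R (E1(m := F1)) i) = (\<Sum>i<m. a i *\<^sub>R E1 i) + r *\<^sub>R F1"
        by simp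
      then show "x0 = C0 + (\<Sum>i<Suc m. (a(m := r)) i *\<^sub>R (E1(m := F1)) i)"
        using x1eq rF1 by (simp add: x1_def algebra_simps)
    qed
  qed
qed


lemma skew_flow:
  fixes L :: "'a::euclidean_space \<Rightarrow> 'a"
  assumes lin: "linear L" and sk: "\<And>x y. L x \<bullet> y = - (x \<bullet> L y)"
  shows "\<exists>(m::nat) a b C0 E1 E2.
      (\<forall>i<m. \<forall>j<m. E1 i \<bullet> E1 j = (if i = j then 1 else 0) \<and> E2 i \<bullet> E2 j = (if i = j then 1 else 0)
          \<and> E1 i \<bullet> E2 j = 0) \<and>
      (\<forall>t. ((\<lambda>t. C0 + (\<Sum>i<m. a i *\<^sub>R (cos (b i * t) *\<^sub>R E1 i + sin (b i * t) *\<^sub>R E2 i)))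
          has_vector_derivative
            L (C0 + (\<Sum>i<m. a i *\<^sub>R (cos (b i * t) *\<^sub>R E1 i + sin (b i * t) *\<^sub>R E2 i)))) (at t)) \<and>
      x0 = C0 + (\<Sum>i<m. a i *\<^sub>R (cos (b i * 0) *\<^sub>R E1 i + sin (b i * 0) *\<^sub>R E2 i))"
proof -
  obtain m :: nat and a b C0 E1 E2 where C0: "L C0 = 0" and
      E: "\<forall>i<m. E1 i \<in> UNIV \<and> E2 i \<in> UNIV \<and> L (E1 i) = b i *\<^sub>R E2 i \<and> L (E2 i) = - (b i *\<^sub>R E1 i)" and
      ON: "\<forall>i<m. \<forall>j<m. E1 i \<bullet> E1 j = (if i = j then 1 else 0) \<and> E2 i \<bullet> E2 j = (if i = j then 1 else 0)
          \<and> E1 i \<bullet> E2 j = 0" and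
      x0eq: "x0 = C0 + (\<Sum>i<m. a i *\<^sub>R E1 i)"
    using skew_decomp[OF lin sk subspace_UNIV subset_UNIV UNIV_I, of x0] by (elim exE conjE) (rule that; assumption)
  have der: "((\<lambda>t. C0 + (\<Sum>i<m. a i *\<^sub>R (cos (b i * t) *\<^sub>R E1 i + sin (b i * t) *\<^sub>R E2 i)))
          has_vector_derivative
            L (C0 + (\<Sum>i<m. a i *\<^sub>R (cos (b i * t) *\<^sub>R E1 i + sin (b i * t) *\<^sub>R E2 i)))) (at t)" for t
  proof -
    have di: "((\<lambda>t. a i *\<^sub>R (cos (b i * t) *\<^sub>R E1 i + sin (b i * t) *\<^sub>R E2 i)) has_vector_derivative
        a i *\<^sub>R ((- (sin (b i * t) * b i)) *\<^sub>R E1 i + (cos (b i * t) * b i) *\<^sub>R E2 i)) (at t)" for i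
      by (auto intro!: derivative_eq_intros simp: algebra_simps)
    have "((\<lambda>t. C0 + (\<Sum>i<m. a i *\<^sub>R (cos (b i * t) *\<^sub>R E1 i + sin (b i * t) *\<^sub>R E2 i)))
          has_vector_derivative 0 +
          (\<Sum>i<m. a i *\<^sub>R ((- (sin (b i * t) * b i)) *\<^sub>R E1 i + (cos (b i * t) * b i) *\<^sub>R E2 i))) (at t)"
      by (intro has_vector_derivative_add has_vector_derivative_const has_vector_derivative_sum di)
    moreover have "L (C0 + (\<Sum>i<m. a i *\<^sub>R (cos (b i * t) *\<^sub>R E1 i + sin (b i * t) *\<^sub>R E2 i))) =
        0 + (\<Sum>i<m. a i *\<^sub>R ((- (sin (b i * t) * b i)) *\<^sub>R E1 i + (cos (b i * t) * b i) *\<^sub>R E2 i))"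
      unfolding linear_add[OF lin] linear_sum[OF lin] C0
    proof (intro arg_cong2[where f="(+)"] refl sum.cong)
      fix i assume "i \<in> {..<m}"
      then have "L (E1 i) = b i *\<^sub>R E2 i" "L (E2 i) = - (b i *\<^sub>R E1 i)" using E by auto
      then show "L (a i *\<^sub>R (cos (b i * t) *\<^sub>R E1 i + sin (b i * t) *\<^sub>R E2 i)) =
          a i *\<^sub>R ((- (sin (b i * t) * b i)) *\<^sub>R E1 i + (cos (b i * t) * b i) *\<^sub>R E2 i)"
        by (simp add: linear_add[OF lin] linear_scale[OF lin] algebra_simps)
    qed
    ultimately show ?thesis by simp
  qed
  show ?thesis
    apply (rule exI[where x=m], rule exI[where x=a], rule exI[where x=b], rule exI[where x=C0],
        rule exI[where x=E1], rule exI[where x=E2])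
    using ON der x0eq by simp
qed

lemma mm_num1: "((X::real^'n^'m) * numeral w) ** Y = numeral w * (X ** Y)"
  by (simp add: vec_eq_iff mm_nth sum_distrib_left mult_ac)
lemma mm_num2: "(numeral w * (X::real^'n^'m)) ** Y = numeral w * (X ** Y)"
  by (simp add: vec_eq_iff mm_nth sum_distrib_left mult_ac)
lemma mm_num3: "(X::real^'n^'m) ** (Y * numeral w) = numeral w * (X ** Y)"
  by (simp add: vec_eq_iff mm_nth sum_distrib_left mult_ac)
lemma mm_num4: "(X::real^'n^'m) ** (numeral w * Y) = numeral w * (X ** Y)"
  by (simp add: vec_eq_iff mm_nth sum_distrib_left mult_ac)

lemmas mms = mm_add_r mm_add_l mm_diff_r mm_diff_l mm_neg_r mm_neg_l mm_scale_r mm_scale_l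
  tr_add tr_diff tr_neg tr_scale tr_mm tr_zero matrix_mul_assoc mm_num1 mm_num2 mm_num3 mm_num4

lemma linear_LNA: "linear (\<lambda>X::real^'p^'n. N ** X - X ** A)"
  by (rule linearI) (simp_all add: mms algebra_simps)

lemma skew_LNA:
  fixes X Y :: "real^'p^'n"
  assumes "transpose N = - N" "transpose A = - (A::real^'p^'p)"
  shows "(N ** X - X ** A) \<bullet> Y = - (X \<bullet> (N ** Y - Y ** A))"
proof -
  have 1: "(N ** X) \<bullet> Y = - (X \<bullet> (N ** Y))"
    by (simp only: inner_mm_left assms mm_neg_r inner_minus_right)
  have 2: "(X ** A) \<bullet> Y = - (X \<bullet> (Y ** A))"
    by (simp only: inner_mm_right assms mm_neg_l inner_minus_right)
  show ?thesis by (simp add: inner_diff_left inner_diff_right 1 2)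
qed

lemma bl_of_lin: "linear (f::'a::euclidean_space \<Rightarrow> 'b::real_normed_vector) \<Longrightarrow> bounded_linear f"
  by (simp add: linear_conv_bounded_linear)




lemma mm_der:
  fixes f :: "real \<Rightarrow> real^'n^'m" and g :: "real \<Rightarrow> real^'p^'n"
  assumes "(f has_vector_derivative f') (at t)" "(g has_vector_derivative g') (at t)"
  shows "((\<lambda>t. f t ** g t) has_vector_derivative (f t ** g' + f' ** g t)) (at t)"
  using bounded_bilinear.has_vector_derivative[OF bb_mm assms] .

lemma tr_der:
  fixes f :: "real \<Rightarrow> real^'n^'m"
  assumes "(f has_vector_derivative f') (at t)"
  shows "((\<lambda>t. transpose (f t)) has_vector_derivative transpose f') (at t)"
  using bounded_linear.has_vector_derivative[OF bl_tr assms] .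


lemma skew_flow_ex:
  fixes L :: "'a::euclidean_space \<Rightarrow> 'a"
  assumes lin: "linear L" and sk: "\<And>x y. L x \<bullet> y = - (x \<bullet> L y)"
  shows "\<exists>Z. (\<forall>t. (Z has_vector_derivative L (Z t)) (at t)) \<and> Z 0 = x0"
proof -
  from skew_flow[OF lin sk, of x0] obtain m :: nat and a b C0 E1 E2 where
    "\<forall>t. ((\<lambda>t. C0 + (\<Sum>i<m. a i *\<^sub>R (cos (b i * t) *\<^sub>R E1 i + sin (b i * t) *\<^sub>R E2 i)))
          has_vector_derivative
            L (C0 + (\<Sum>i<m. a i *\<^sub>R (cos (b i * t) *\<^sub>R E1 i + sin (b i * t) *\<^sub>R E2 i)))) (at t)"
    "x0 = C0 + (\<Sum>i<m. a i *\<^sub>R (cos (b i * 0) *\<^sub>R E1 i + sin (b i * 0) *\<^sub>R E2 i))"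
    by blast
  then show ?thesis by (intro exI[where x="\<lambda>t. C0 + (\<Sum>i<m. a i *\<^sub>R (cos (b i * t) *\<^sub>R E1 i + sin (b i * t) *\<^sub>R E2 i))"]) simp
qed

lemma hvd_eq: "(f has_vector_derivative a) F \<Longrightarrow> a = b \<Longrightarrow> (f has_vector_derivative b) F"
  by simp

lemma sym_skew_inner: "transpose (S::real^'p^'p) = S \<Longrightarrow> transpose W = - W \<Longrightarrow> S \<bullet> W = 0"
proof -
  assume a: "transpose S = S" "transpose W = - W"
  have "S \<bullet> W = transpose S \<bullet> transpose W" by (simp only: inner_tr)
  also have "\<dots> = - (S \<bullet> W)" by (simp add: a)
  finally show ?thesis by simp
qed

lemma geod_from_flow:
  fixes U \<Delta> :: "real^'p^'n" and \<eta> :: "real \<Rightarrow> real^'p^'n"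
  assumes U: "transpose U ** U = mat 1" and D: "transpose U ** \<Delta> = - (transpose \<Delta> ** U)"
  and A_def: "A = transpose U ** \<Delta>" and K_def: "K = \<Delta> - U ** A"
  and N_def: "N = U ** A ** transpose U - U ** transpose A ** transpose U + K ** transpose U - U ** transpose K"
  and d\<eta>: "\<And>t. (\<eta> has_vector_derivative (N ** \<eta> t - \<eta> t ** A)) (at t)" and \<eta>0: "\<eta> 0 = U"
  shows "euclid_geodesic U (c *\<^sub>R \<Delta>) (\<lambda>s. \<eta> (c * s))"
proof -
  define L where "L X = N ** X - X ** A" for X :: "real^'p^'n"
  define M where "M X = A ** X - X ** A" for X :: "real^'p^'p"
  have tA1: "transpose A = transpose \<Delta> ** U" by (simp add: A_def tr_mm)
  have tA2: "transpose \<Delta> ** U = - A" using D A_def by simp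
  have tA: "transpose A = - A" using tA1 tA2 by simp
  have UU: "X ** transpose U ** U = X" for X :: "real^'p^'q"
    by (metis U matrix_mul_assoc matrix_mul_rid)
  have UK0: "transpose U ** K = 0" by (simp add: K_def mms U A_def)
  have UK: "X ** transpose U ** K = 0" for X :: "real^'p^'q"
    by (metis UK0 matrix_mul_assoc times0_right)
  have KU0: "transpose K ** U = 0" by (metis UK0 tr_mm transpose_transpose tr_zero)
  have KU: "X ** transpose K ** U = 0" for X :: "real^'p^'q"
    by (metis KU0 matrix_mul_assoc times0_right)
  have tN: "transpose N = - N" by (simp add: N_def mms algebra_simps)
  have NU: "N ** U = U ** A - U ** transpose A + K" by (simp add: N_def mms UU KU)
  have NK: "N ** K = - (U ** transpose K ** K)" by (simp add: N_def mms UK)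
  have DK: "\<Delta> = U ** A + K" by (simp add: K_def)
  have LU: "L U = \<Delta>" by (simp add: L_def NU tA mms DK)
  have linL: "linear L" unfolding L_def by (rule linear_LNA)
  have linM: "linear M" unfolding M_def by (rule linear_LNA)
  have skL: "\<And>x y. L x \<bullet> y = - (x \<bullet> L y)" unfolding L_def by (rule skew_LNA[OF tN tA])
  have skM: "\<And>x y. M x \<bullet> y = - (x \<bullet> M y)" unfolding M_def by (rule skew_LNA[OF tA tA])
  have skL0: "L x \<bullet> x = 0" for x using skL[of x x] by (simp add: inner_commute)
  have skM0: "M x \<bullet> x = 0" for x using skM[of x x] by (simp add: inner_commute)
  have blL: "bounded_linear L" by (rule bl_of_lin[OF linL])
  have blM: "bounded_linear M" by (rule bl_of_lin[OF linM])
  have d\<eta>': "(\<eta> has_vector_derivative L (\<eta> t)) (at t)" for t using d\<eta> by (simp add: L_def)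
  have psi: "transpose (\<eta> t) ** \<eta> t = mat 1" for t
  proof (rule skew_ode_unique[OF blM skM0, where Y="\<lambda>_. mat 1"])
    show "((\<lambda>t. transpose (\<eta> t) ** \<eta> t) has_vector_derivative M (transpose (\<eta> t) ** \<eta> t)) (at t)" for t
      by (rule hvd_eq[OF mm_der[OF tr_der[OF d\<eta>] d\<eta>]]) (simp add: M_def mms tN tA algebra_simps)
    show "((\<lambda>_. mat 1) has_vector_derivative M (mat 1)) (at t)" for t
      by (simp add: M_def)
    show "transpose (\<eta> 0) ** \<eta> 0 = mat 1" using \<eta>0 U by simp
  qed
  obtain C where dC: "\<And>t. (C has_vector_derivative M (C t)) (at t)" and C0: "C 0 = transpose K ** K"
    using skew_flow_ex[OF linM skM, of "transpose K ** K"] by blast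
  have Csym: "transpose (C t) = C t" for t
  proof (rule skew_ode_unique[OF blM skM0, where X="\<lambda>t. transpose (C t)" and Y=C])
    show "((\<lambda>t. transpose (C t)) has_vector_derivative M (transpose (C t))) (at t)" for t
      by (rule hvd_eq[OF tr_der[OF dC]]) (simp add: M_def mms tA)
    show "(C has_vector_derivative M (C t)) (at t)" for t by (rule dC)
    show "transpose (C 0) = C 0" by (simp add: C0 tr_mm)
  qed
  have LL: "L (L (\<eta> t)) = \<eta> t ** (A ** A - C t)" for t
  proof -
    define \<Phi> where "\<Phi> t = L (L (\<eta> t)) - \<eta> t ** (A ** A) + \<eta> t ** C t" for t
    have "\<Phi> t = (\<lambda>_. 0) t"
    proof (rule skew_ode_unique[OF blL skL0])
      show "(\<Phi> has_vector_derivative L (\<Phi> t)) (at t)" for t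
      proof -
        have d1: "((\<lambda>t. L (L (\<eta> t))) has_vector_derivative L (L (L (\<eta> t)))) (at t)"
          by (rule bounded_linear.has_vector_derivative[OF blL],
              rule bounded_linear.has_vector_derivative[OF blL d\<eta>'])
        have d2: "((\<lambda>t. \<eta> t ** (A ** A)) has_vector_derivative (\<eta> t ** 0 + L (\<eta> t) ** (A ** A))) (at t)"
          by (rule mm_der[OF d\<eta>' has_vector_derivative_const])
        have d3: "((\<lambda>t. \<eta> t ** C t) has_vector_derivative (\<eta> t ** M (C t) + L (\<eta> t) ** C t)) (at t)"
          by (rule mm_der[OF d\<eta>' dC])
        show ?thesis unfolding \<Phi>_def
          by (rule hvd_eq[OF has_vector_derivative_add[OF has_vector_derivative_diff[OF d1 d2] d3]])
            (simp add: L_def M_def mms algebra_simps)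
      qed
      show "((\<lambda>_. 0) has_vector_derivative L ((\<lambda>_. 0) t)) (at t)" for t
        by (simp add: L_def)
      have "\<Phi> 0 = L \<Delta> - U ** (A ** A) + U ** (transpose K ** K)"
        by (simp add: \<Phi>_def \<eta>0 C0 LU)
      also have "\<dots> = 0"
        by (simp add: DK L_def mms NU NK tA algebra_simps)
      finally show "\<Phi> 0 = (\<lambda>_. 0) 0" by simp
    qed
    then show ?thesis by (simp add: \<Phi>_def mms algebra_simps)
  qed
  have Ssym: "transpose (A ** A - C t) = A ** A - C t" for t
    by (simp add: mms tA Csym)
  have dlin: "((\<lambda>s. c * s) has_vector_derivative c) (at s)" for s
    using has_vector_derivative_mult_right[OF has_vector_derivative_id, of c] by simp
  have g1: "((\<lambda>s. \<eta> (c * s)) has_vector_derivative c *\<^sub>R L (\<eta> (c * s))) (at s)" for s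
    using vector_diff_chain_at[OF dlin d\<eta>'] by (simp add: o_def)
  have g2: "((\<lambda>s. c *\<^sub>R L (\<eta> (c * s))) has_vector_derivative c *\<^sub>R (c *\<^sub>R L (L (\<eta> (c * s))))) (at s)" for s
  proof -
    have "((\<lambda>t. L (\<eta> t)) has_vector_derivative L (L (\<eta> t))) (at t)" for t
      by (rule bounded_linear.has_vector_derivative[OF blL d\<eta>'])
    from vector_diff_chain_at[OF dlin this]
    have "((\<lambda>s. L (\<eta> (c * s))) has_vector_derivative c *\<^sub>R L (L (\<eta> (c * s)))) (at s)"
      by (simp add: o_def)
    then show ?thesis
      by (rule bounded_linear.has_vector_derivative[OF bounded_linear_scaleR_right])
  qed
  show ?thesis unfolding euclid_geodesic_def
  proof (intro exI conjI allI ballI)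
    show "((\<lambda>s. \<eta> (c * s)) has_vector_derivative c *\<^sub>R L (\<eta> (c * s))) (at s)" for s by (rule g1)
    show "((\<lambda>s. c *\<^sub>R L (\<eta> (c * s))) has_vector_derivative c *\<^sub>R (c *\<^sub>R L (L (\<eta> (c * s))))) (at s)" for s
      by (rule g2)
    show "\<eta> (c * t) \<in> stiefel" for t by (simp add: stiefel_def psi)
    show "frob_inner (c *\<^sub>R (c *\<^sub>R L (L (\<eta> (c * t))))) Da = 0"
      if "Da \<in> stiefel_tangent (\<eta> (c * t))" for t Da
    proof -
      have W: "transpose (transpose (\<eta> (c * t)) ** Da) = - (transpose (\<eta> (c * t)) ** Da)"
      proof -
        have W0: "transpose (\<eta> (c * t)) ** Da = - (transpose Da ** \<eta> (c * t))"
          using that by (simp add: stiefel_tangent_def)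
        have "transpose (transpose (\<eta> (c * t)) ** Da) = transpose Da ** \<eta> (c * t)"
          by (simp add: tr_mm)
        then show ?thesis using W0 by simp
      qed
      have "(A ** A - C (c * t)) \<bullet> (transpose (\<eta> (c * t)) ** Da) = 0"
        by (rule sym_skew_inner[OF Ssym W])
      then show ?thesis by (simp add: frob_inner_eq LL inner_mm_left)
    qed
    show "\<eta> (c * 0) = U" by (simp add: \<eta>0)
    show "c *\<^sub>R L (\<eta> (c * 0)) = c *\<^sub>R \<Delta>" by (simp add: \<eta>0 LU)
  qed
qed

lemma double_eq: "(a::'a::real_vector) + a = b + b \<Longrightarrow> a = b"
  by (metis scaleR_2 scaleR_cancel_left zero_neq_numeral)

lemma normal_space:
  fixes Y Z :: "real^'p^'n"
  assumes Y: "transpose Y ** Y = mat 1"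
  and nz: "\<And>D. transpose Y ** D = - (transpose D ** Y) \<Longrightarrow> frob_inner Z D = 0"
  shows "Z = Y ** (transpose Y ** Z)" and "transpose (transpose Y ** Z) = transpose Y ** Z"
proof -
  define W where "W = transpose Y ** Z"
  have YY: "transpose Y ** (Y ** X) = X" for X :: "real^'q^'p"
    by (metis Y matrix_mul_assoc matrix_mul_lid)
  define D1 where "D1 = Z - Y ** W"
  have tD1: "transpose Y ** D1 = 0" by (simp add: D1_def mm_diff_l YY W_def)
  have "transpose D1 ** Y = 0" by (metis tD1 tr_mm transpose_transpose tr_zero)
  then have "Z \<bullet> D1 = 0" using nz[of D1] tD1 by (simp add: frob_inner_eq)
  moreover have "(Y ** W) \<bullet> D1 = 0" by (simp add: inner_mm_left tD1)
  ultimately have "D1 \<bullet> D1 = 0" by (simp add: D1_def inner_diff_left)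
  then show Z: "Z = Y ** (transpose Y ** Z)" by (simp add: D1_def W_def)
  define V where "V = W - transpose W"
  have tV: "transpose V = - V" by (simp add: V_def tr_diff)
  define D2 where "D2 = Y ** V"
  have "transpose Y ** D2 = V" by (simp add: D2_def YY)
  moreover have "transpose D2 ** Y = - V"
    by (simp add: D2_def tr_mm tV mm_neg_r Y flip: matrix_mul_assoc)
  ultimately have "Z \<bullet> D2 = 0" using nz[of D2] by (simp add: frob_inner_eq)
  then have "W \<bullet> V = 0" by (simp add: D2_def inner_commute[of Z] inner_mm_left W_def)
  moreover have "transpose W \<bullet> V = - (W \<bullet> V)"
  proof -
    have "transpose W \<bullet> V = W \<bullet> transpose V" by (metis inner_tr transpose_transpose)
    then show ?thesis by (simp add: tV)
  qed
  ultimately have "V \<bullet> V = 0" by (simp add: V_def inner_diff_left)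
  then show "transpose (transpose Y ** Z) = transpose Y ** Z" by (simp add: V_def W_def)
qed

lemma geod_facts:
  fixes U V :: "real^'p^'n"
  assumes d1: "\<And>t. (g has_vector_derivative g' t) (at t)"
    and d2: "\<And>t. (g' has_vector_derivative g'' t) (at t)"
    and st: "\<And>t. g t \<in> stiefel"
    and nr: "\<And>t D. D \<in> stiefel_tangent (g t) \<Longrightarrow> frob_inner (g'' t) D = 0"
    and g'0: "g' 0 = V"
  shows "g'' t = - (g t ** (transpose (g' t) ** g' t))"
    and "norm (g t) = sqrt (real CARD('p))"
    and "norm (g' t) = norm V"
proof -
  have gg: "transpose (g t) ** g t = mat 1" for t using st[of t] by (simp add: stiefel_def)
  have sk: "transpose (g t) ** g' t + transpose (g' t) ** g t = 0" for t
  proof -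
    have "((\<lambda>t. transpose (g t) ** g t) has_vector_derivative
        (transpose (g t) ** g' t + transpose (g' t) ** g t)) (at t)"
      by (rule mm_der[OF tr_der[OF d1] d1])
    moreover have "((\<lambda>t. transpose (g t) ** g t) has_vector_derivative 0) (at t)"
      by (simp add: gg)
    ultimately show ?thesis by (rule vector_derivative_unique_at)
  qed
  have sk2: "(transpose (g t) ** g'' t + transpose (g' t) ** g' t) +
      (transpose (g' t) ** g' t + transpose (g'' t) ** g t) = 0" for t
  proof -
    have "((\<lambda>t. transpose (g t) ** g' t + transpose (g' t) ** g t) has_vector_derivative
        (transpose (g t) ** g'' t + transpose (g' t) ** g' t) +
        (transpose (g' t) ** g' t + transpose (g'' t) ** g t)) (at t)"
      by (rule has_vector_derivative_add[OF mm_der[OF tr_der[OF d1] d2] mm_der[OF tr_der[OF d2] d1]])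
    moreover have "((\<lambda>t. transpose (g t) ** g' t + transpose (g' t) ** g t) has_vector_derivative 0) (at t)"
      by (simp add: sk)
    ultimately show ?thesis by (rule vector_derivative_unique_at)
  qed
  have tang: "g' t \<in> stiefel_tangent (g t)" for t
    using sk[of t] by (simp add: stiefel_tangent_def eq_neg_iff_add_eq_0)
  have nz: "frob_inner (g'' t) D = 0" if "transpose (g t) ** D = - (transpose D ** g t)" for D
    using nr[of D t] that by (simp add: stiefel_tangent_def)
  note NS = normal_space[OF gg[of t] nz]
  define W where "W = transpose (g t) ** g'' t"
  have Wsym: "transpose W = W" using NS(2) by (simp add: W_def)
  have "transpose (g'' t) ** g t = W" using Wsym by (simp add: W_def tr_mm)
  then have "W + W = - (transpose (g' t) ** g' t) + - (transpose (g' t) ** g' t)"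
    using sk2[of t] unfolding W_def[symmetric] by (simp add: algebra_simps eq_neg_iff_add_eq_0)
  then have "W = - (transpose (g' t) ** g' t)" by (rule double_eq)
  then show "g'' t = - (g t ** (transpose (g' t) ** g' t))"
    using NS(1) by (simp add: W_def mm_neg_l)
  have "g t \<bullet> g t = real CARD('p)"
    using gg[of t] by (simp add: frob_inner_eq[symmetric] frob_inner_def trace_def mat_def)
  then show "norm (g t) = sqrt (real CARD('p))" by (simp add: norm_eq_sqrt_inner)
  have "((\<lambda>t. g' t \<bullet> g' t) has_vector_derivative (g' t \<bullet> g'' t + g'' t \<bullet> g' t)) (at t)" for t
    by (rule bounded_bilinear.has_vector_derivative[OF bounded_bilinear_inner d2 d2])
  moreover have "g'' t \<bullet> g' t = 0" for t using nr[OF tang[of t]] by (simp add: frob_inner_eq)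
  ultimately have "DERIV (\<lambda>t. g' t \<bullet> g' t) t :> 0" for t
    by (simp add: has_real_derivative_iff_has_vector_derivative inner_commute)
  then have "g' t \<bullet> g' t = g' 0 \<bullet> g' 0" by (intro DERIV_isconst_all) auto
  then show "norm (g' t) = norm V" by (simp add: norm_eq_sqrt_inner g'0)
qed


lemma gronwall0:
  fixes e e' :: "real \<Rightarrow> real"
  assumes de: "\<And>s. DERIV e s :> e' s" and bd: "\<And>s. \<bar>e' s\<bar> \<le> B * e s"
    and pos: "\<And>s. e s \<ge> 0" and e0: "e 0 = 0"
  shows "e t = 0"
proof (cases "t \<ge> 0")
  case True
  define f where "f s = e s * exp (- B * s)" for s
  have "f t \<le> f 0"
  proof (rule DERIV_nonpos_imp_nonincreasing[OF True])
    fix x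
    have "DERIV f x :> e' x * exp (- B * x) + e x * (exp (- B * x) * (- B))"
      unfolding f_def by (auto intro!: derivative_eq_intros de)
    moreover have "e' x * exp (- B * x) + e x * (exp (- B * x) * (- B)) = (e' x - B * e x) * exp (- B * x)"
      by (simp add: algebra_simps)
    moreover have "(e' x - B * e x) * exp (- B * x) \<le> 0"
      using bd[of x] by (intro mult_nonpos_nonneg) auto
    ultimately show "\<exists>y. DERIV f x :> y \<and> y \<le> 0" by auto
  qed
  then have "e t * exp (- B * t) \<le> 0" by (simp add: f_def e0)
  then have "e t \<le> 0" by (simp add: mult_le_0_iff)
  then show ?thesis using pos[of t] by simp
next
  case False
  then have t0: "t \<le> 0" by simp
  define f where "f s = e s * exp (B * s)" for s
  have "f t \<le> f 0"
  proof (rule DERIV_nonneg_imp_nondecreasing[OF t0])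
    fix x
    have "DERIV f x :> e' x * exp (B * x) + e x * (exp (B * x) * B)"
      unfolding f_def by (auto intro!: derivative_eq_intros de)
    moreover have "e' x * exp (B * x) + e x * (exp (B * x) * B) = (e' x + B * e x) * exp (B * x)"
      by (simp add: algebra_simps)
    moreover have "(e' x + B * e x) * exp (B * x) \<ge> 0"
      using bd[of x] by (intro mult_nonneg_nonneg) auto
    ultimately show "\<exists>y. DERIV f x :> y \<and> y \<ge> 0" by auto
  qed
  then have "e t * exp (B * t) \<le> 0" by (simp add: f_def e0)
  then have "e t \<le> 0" by (simp add: mult_le_0_iff)
  then show ?thesis using pos[of t] by simp
qed

lemma geod_unique:
  fixes U V :: "real^'p^'n"
  assumes G1: "euclid_geodesic U V g1" and G2: "euclid_geodesic U V g2"
  shows "g1 = g2"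
proof -
  obtain g1' g1'' where a1: "\<And>t. (g1 has_vector_derivative g1' t) (at t)"
    "\<And>t. (g1' has_vector_derivative g1'' t) (at t)" "\<And>t. g1 t \<in> stiefel"
    "\<And>t D. D \<in> stiefel_tangent (g1 t) \<Longrightarrow> frob_inner (g1'' t) D = 0" "g1 0 = U" "g1' 0 = V"
    using G1 unfolding euclid_geodesic_def by blast
  obtain g2' g2'' where a2: "\<And>t. (g2 has_vector_derivative g2' t) (at t)"
    "\<And>t. (g2' has_vector_derivative g2'' t) (at t)" "\<And>t. g2 t \<in> stiefel"
    "\<And>t D. D \<in> stiefel_tangent (g2 t) \<Longrightarrow> frob_inner (g2'' t) D = 0" "g2 0 = U" "g2' 0 = V"
    using G2 unfolding euclid_geodesic_def by blast
  note F1 = geod_facts[OF a1(1-4) a1(6)]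
  note F2 = geod_facts[OF a2(1-4) a2(6)]
  define c where "c = norm V"
  define r where "r = sqrt (real CARD('p))"
  define K where "K = c * c + 2 * r * c"
  define B where "B = 1 + 3 * K"
  have c0: "c \<ge> 0" and r0: "r \<ge> 0" by (simp_all add: c_def r_def)
  have K0: "K \<ge> 0" using c0 r0 by (simp add: K_def)
  define \<delta> where "\<delta> s = g1 s - g2 s" for s
  define \<epsilon> where "\<epsilon> s = g1' s - g2' s" for s
  define \<eta> where "\<eta> s = g1'' s - g2'' s" for s
  have d\<delta>: "(\<delta> has_vector_derivative \<epsilon> s) (at s)" for s
    unfolding \<delta>_def \<epsilon>_def by (rule has_vector_derivative_diff[OF a1(1) a2(1)])
  have d\<epsilon>: "(\<epsilon> has_vector_derivative \<eta> s) (at s)" for s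
    unfolding \<epsilon>_def \<eta>_def by (rule has_vector_derivative_diff[OF a1(2) a2(2)])
  have hb: "norm (\<eta> s) \<le> K * (norm (\<delta> s) + norm (\<epsilon> s))" for s
  proof -
    have eq: "\<eta> s = - (\<delta> s ** (transpose (g1' s) ** g1' s) +
        g2 s ** (transpose (g1' s) ** \<epsilon> s + transpose (\<epsilon> s) ** g2' s))"
      by (simp add: \<eta>_def \<delta>_def \<epsilon>_def F1(1) F2(1) mms algebra_simps)
    have n1: "norm (\<delta> s ** (transpose (g1' s) ** g1' s)) \<le> norm (\<delta> s) * (c * c)"
    proof -
      have "norm (transpose (g1' s) ** g1' s) \<le> c * c"
        using norm_mm[of "transpose (g1' s)" "g1' s"] by (simp add: norm_tr F1(3) c_def)
      then show ?thesis
        by (meson norm_mm order_trans mult_left_mono norm_ge_zero)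
    qed
    have n2: "norm (transpose (g1' s) ** \<epsilon> s + transpose (\<epsilon> s) ** g2' s) \<le> c * norm (\<epsilon> s) + norm (\<epsilon> s) * c"
    proof -
      have "norm (transpose (g1' s) ** \<epsilon> s) \<le> c * norm (\<epsilon> s)"
        using norm_mm[of "transpose (g1' s)" "\<epsilon> s"] by (simp add: norm_tr F1(3) c_def)
      moreover have "norm (transpose (\<epsilon> s) ** g2' s) \<le> norm (\<epsilon> s) * c"
        using norm_mm[of "transpose (\<epsilon> s)" "g2' s"] by (simp add: norm_tr F2(3) c_def)
      ultimately show ?thesis by (meson add_mono norm_triangle_ineq order_trans)
    qed
    have n3: "norm (g2 s ** (transpose (g1' s) ** \<epsilon> s + transpose (\<epsilon> s) ** g2' s)) \<le> r * (c * norm (\<epsilon> s) + norm (\<epsilon> s) * c)"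
    proof -
      have "norm (g2 s ** (transpose (g1' s) ** \<epsilon> s + transpose (\<epsilon> s) ** g2' s)) \<le>
          r * norm (transpose (g1' s) ** \<epsilon> s + transpose (\<epsilon> s) ** g2' s)"
        using norm_mm[of "g2 s" "transpose (g1' s) ** \<epsilon> s + transpose (\<epsilon> s) ** g2' s"]
        by (simp add: F2(2) r_def)
      also have "\<dots> \<le> r * (c * norm (\<epsilon> s) + norm (\<epsilon> s) * c)"
        by (rule mult_left_mono[OF n2 r0])
      finally show ?thesis .
    qed
    have "norm (\<eta> s) \<le> norm (\<delta> s) * (c * c) + r * (c * norm (\<epsilon> s) + norm (\<epsilon> s) * c)"
      unfolding eq norm_minus_cancel using n1 n3 by (meson add_mono norm_triangle_ineq order_trans)
    also have "\<dots> = (c * c) * norm (\<delta> s) + (2 * r * c) * norm (\<epsilon> s)" by (simp add: algebra_simps)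
    also have "\<dots> \<le> K * norm (\<delta> s) + K * norm (\<epsilon> s)"
      using c0 r0 by (intro add_mono mult_right_mono) (auto simp: K_def)
    finally show ?thesis by (simp add: distrib_left)
  qed
  define e where "e s = \<delta> s \<bullet> \<delta> s + \<epsilon> s \<bullet> \<epsilon> s" for s
  define e' where "e' s = (\<delta> s \<bullet> \<epsilon> s + \<epsilon> s \<bullet> \<delta> s) + (\<epsilon> s \<bullet> \<eta> s + \<eta> s \<bullet> \<epsilon> s)" for s
  have de: "DERIV e s :> e' s" for s
    unfolding has_real_derivative_iff_has_vector_derivative e_def e'_def
    by (rule has_vector_derivative_add[OF bounded_bilinear.has_vector_derivative[OF bounded_bilinear_inner d\<delta> d\<delta>]
          bounded_bilinear.has_vector_derivative[OF bounded_bilinear_inner d\<epsilon> d\<epsilon>]])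
  have bd: "\<bar>e' s\<bar> \<le> B * e s" for s
  proof -
    define a where "a = norm (\<delta> s)"
    define b where "b = norm (\<epsilon> s)"
    define h where "h = norm (\<eta> s)"
    have a0: "a \<ge> 0" and b0: "b \<ge> 0" by (simp_all add: a_def b_def)
    have es: "e s = a * a + b * b" by (simp add: e_def a_def b_def norm_eq_sqrt_inner)
    have "e' s = 2 * (\<delta> s \<bullet> \<epsilon> s) + 2 * (\<epsilon> s \<bullet> \<eta> s)" by (simp add: e'_def inner_commute)
    then have "\<bar>e' s\<bar> \<le> 2 * \<bar>\<delta> s \<bullet> \<epsilon> s\<bar> + 2 * \<bar>\<epsilon> s \<bullet> \<eta> s\<bar>" by simp
    also have "\<dots> \<le> 2 * (a * b) + 2 * (b * h)"
      using Cauchy_Schwarz_ineq2[of "\<delta> s" "\<epsilon> s"] Cauchy_Schwarz_ineq2[of "\<epsilon> s" "\<eta> s"]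
      by (simp add: a_def b_def h_def)
    also have "\<dots> \<le> 2 * (a * b) + 2 * (b * (K * (a + b)))"
      using hb[of s] b0 by (simp add: a_def b_def h_def mult_left_mono)
    also have "\<dots> = 2 * (a * b) + K * (2 * (a * b)) + 2 * K * (b * b)" by (simp add: algebra_simps)
    also have "\<dots> \<le> (a * a + b * b) + K * (a * a + b * b) + 2 * K * (a * a + b * b)"
    proof -
      have q: "(a - b) * (a - b) = a * a + b * b - 2 * (a * b)" by (simp add: algebra_simps)
      have s1: "2 * (a * b) \<le> a * a + b * b" using zero_le_square[of "a - b"] q by linarith
      have s2: "K * (2 * (a * b)) \<le> K * (a * a + b * b)" by (rule mult_left_mono[OF s1 K0])
      have s3: "2 * K * (b * b) \<le> 2 * K * (a * a + b * b)" using K0 a0 by (intro mult_left_mono) auto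
      show ?thesis using s1 s2 s3 by linarith
    qed
    also have "\<dots> = B * e s" by (simp add: es B_def algebra_simps)
    finally show ?thesis .
  qed
  have pos: "e s \<ge> 0" for s by (simp add: e_def)
  have e0: "e 0 = 0" by (simp add: e_def \<delta>_def \<epsilon>_def a1(5,6) a2(5,6))
  have "e t = 0" for t by (rule gronwall0[OF de bd pos e0])
  then have "\<delta> t = 0" for t using pos by (simp add: e_def add_nonneg_eq_0_iff)
  then show ?thesis by (auto simp: \<delta>_def)
qed

theorem corollary3p3:
  fixes U \<Delta> :: "real^'p^'n"
  assumes "CARD('p) \<le> CARD('n)"
    and "U \<in> stiefel"
    and "\<Delta> \<in> stiefel_tangent U"
  shows "\<exists>(m::nat) (a::nat \<Rightarrow> real) (b::nat \<Rightarrow> real) (C0::real^'p^'n) (E::nat \<Rightarrow> real^'p^'n).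
           (\<forall>i\<in>{1..2*m}. \<forall>j\<in>{1..2*m}. frob_inner (E i) (E j) = (if i = j then 1 else 0)) \<and>
           (\<forall>t::real. stiefel_Exp U (t *\<^sub>R \<Delta>) =
              C0 + (\<Sum>i=1..m. a i *\<^sub>R (cos (b i * t) *\<^sub>R E (2*i - 1) + sin (b i * t) *\<^sub>R E (2*i))))"
proof -
  have U: "transpose U ** U = mat 1" using assms(2) by (simp add: stiefel_def)
  have D: "transpose U ** \<Delta> = - (transpose \<Delta> ** U)" using assms(3) by (simp add: stiefel_tangent_def)
  define A where "A = transpose U ** \<Delta>"
  define K where "K = \<Delta> - U ** A"
  define N where "N = U ** A ** transpose U - U ** transpose A ** transpose U + K ** transpose U - U ** transpose K"
  define L where "L X = N ** X - X ** A" for X :: "real^'p^'n"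
  have tA1: "transpose A = transpose \<Delta> ** U" by (simp add: A_def tr_mm)
  have tA2: "transpose \<Delta> ** U = - A" using D A_def by simp
  have tA: "transpose A = - A" using tA1 tA2 by simp
  have tN: "transpose N = - N" by (simp add: N_def mms algebra_simps)
  have linL: "linear L" unfolding L_def by (rule linear_LNA)
  have skL: "\<And>x y. L x \<bullet> y = - (x \<bullet> L y)" unfolding L_def by (rule skew_LNA[OF tN tA])
  obtain m :: nat and a b C0 E1 E2 where
    ON: "\<forall>i<m. \<forall>j<m. E1 i \<bullet> E1 j = (if i = j then 1 else 0) \<and> E2 i \<bullet> E2 j = (if i = j then 1 else 0)
          \<and> E1 i \<bullet> E2 j = 0" and
    der: "\<forall>t. ((\<lambda>t. C0 + (\<Sum>i<m. a i *\<^sub>R (cos (b i * t) *\<^sub>R E1 i + sin (b i * t) *\<^sub>R E2 i)))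
          has_vector_derivative
            L (C0 + (\<Sum>i<m. a i *\<^sub>R (cos (b i * t) *\<^sub>R E1 i + sin (b i * t) *\<^sub>R E2 i)))) (at t)" and
    Z0: "U = C0 + (\<Sum>i<m. a i *\<^sub>R (cos (b i * 0) *\<^sub>R E1 i + sin (b i * 0) *\<^sub>R E2 i))"
    using skew_flow[OF linL skL, of U] by (elim exE conjE) (rule that; assumption)
  define \<eta> where "\<eta> t = C0 + (\<Sum>i<m. a i *\<^sub>R (cos (b i * t) *\<^sub>R E1 i + sin (b i * t) *\<^sub>R E2 i))" for t
  have d\<eta>: "(\<eta> has_vector_derivative (N ** \<eta> t - \<eta> t ** A)) (at t)" for t
    using der unfolding \<eta>_def[abs_def] L_def by blast
  have \<eta>0: "\<eta> 0 = U" using Z0 by (simp add: \<eta>_def)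
  have geo: "euclid_geodesic U (c *\<^sub>R \<Delta>) (\<lambda>s. \<eta> (c * s))" for c
    by (rule geod_from_flow[OF U D A_def K_def N_def d\<eta> \<eta>0])
  have Exp: "stiefel_Exp U (t *\<^sub>R \<Delta>) = \<eta> t" for t
  proof -
    have "(THE \<gamma>. euclid_geodesic U (t *\<^sub>R \<Delta>) \<gamma>) = (\<lambda>s. \<eta> (t * s))"
    proof (rule the_equality)
      show "euclid_geodesic U (t *\<^sub>R \<Delta>) (\<lambda>s. \<eta> (t * s))" by (rule geo)
      show "\<gamma> = (\<lambda>s. \<eta> (t * s))" if "euclid_geodesic U (t *\<^sub>R \<Delta>) \<gamma>" for \<gamma>
        by (rule geod_unique[OF that geo])
    qed
    then show ?thesis by (simp add: stiefel_Exp_def)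
  qed
  define E where "E k = (if even k then E2 (k div 2 - 1) else E1 (k div 2))" for k
  show ?thesis
  proof (rule exI[where x=m], rule exI[where x="\<lambda>i. a (i - 1)"], rule exI[where x="\<lambda>i. b (i - 1)"],
      rule exI[where x=C0], rule exI[where x=E], intro conjI ballI allI)
    fix i j assume i: "i \<in> {1..2*m}" and j: "j \<in> {1..2*m}"
    show "frob_inner (E i) (E j) = (if i = j then 1 else 0)"
    proof (cases "even i")
      case ei: True
      then obtain i' where i': "i = 2 * i'" by blast
      have i'm: "i' - 1 < m" "i' \<ge> 1" using i i' by auto
      show ?thesis
      proof (cases "even j")
        case True
        then obtain j' where j': "j = 2 * j'" by blast
        have "j' - 1 < m" "j' \<ge> 1" using j j' by auto
        then show ?thesis using ON i'm by (auto simp: frob_inner_eq E_def i' j')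
      next
        case False
        then obtain j' where j': "j = 2 * j' + 1" using oddE by blast
        have jm: "j' < m" using j j' by auto
        have z: "E1 j' \<bullet> E2 (i' - 1) = 0" using ON i'm jm by blast
        have ne: "i \<noteq> j" using i' j' by presburger
        have Eij: "E i = E2 (i' - 1)" "E j = E1 j'" using ei False by (simp_all add: E_def i' j')
        have z': "E2 (i' - 1) \<bullet> E1 j' = 0" by (metis z inner_commute)
        then show ?thesis using ne Eij by (simp add: frob_inner_eq)
      qed
    next
      case oi: False
      then obtain i' where i': "i = 2 * i' + 1" using oddE by blast
      have i'm: "i' < m" using i i' by auto
      show ?thesis
      proof (cases "even j")
        case True
        then obtain j' where j': "j = 2 * j'" by blast
        have jm: "j' - 1 < m" using j j' by auto
        have z: "E1 i' \<bullet> E2 (j' - 1) = 0" using ON i'm jm by blast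
        have ne: "i \<noteq> j" using i' j' by presburger
        have "E i = E1 i'" "E j = E2 (j' - 1)" using oi True by (simp_all add: E_def i' j')
        then show ?thesis using z ne by (simp add: frob_inner_eq)
      next
        case False
        then obtain j' where j': "j = 2 * j' + 1" using oddE by blast
        have "j' < m" using j j' by auto
        then show ?thesis using ON i'm by (auto simp: frob_inner_eq E_def i' j')
      qed
    qed
  next
    fix t :: real
    have "(\<Sum>i=1..m. a (i - 1) *\<^sub>R (cos (b (i - 1) * t) *\<^sub>R E (2*i - 1) + sin (b (i - 1) * t) *\<^sub>R E (2*i)))
        = (\<Sum>k<m. a k *\<^sub>R (cos (b k * t) *\<^sub>R E (2 * Suc k - 1) + sin (b k * t) *\<^sub>R E (2 * Suc k)))"
      unfolding One_nat_def sum.atLeast1_atMost_eq by simp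
    also have "\<dots> = (\<Sum>k<m. a k *\<^sub>R (cos (b k * t) *\<^sub>R E1 k + sin (b k * t) *\<^sub>R E2 k))"
    proof (rule sum.cong[OF refl])
      fix k
      have "E (2 * Suc k - 1) = E1 k" by (simp add: E_def)
      moreover have "E (2 * Suc k) = E2 k" by (simp add: E_def)
      ultimately show "a k *\<^sub>R (cos (b k * t) *\<^sub>R E (2 * Suc k - 1) + sin (b k * t) *\<^sub>R E (2 * Suc k)) =
          a k *\<^sub>R (cos (b k * t) *\<^sub>R E1 k + sin (b k * t) *\<^sub>R E2 k)" by simp
    qed
    finally show "stiefel_Exp U (t *\<^sub>R \<Delta>) =
        C0 + (\<Sum>i=1..m. a (i - 1) *\<^sub>R (cos (b (i - 1) * t) *\<^sub>R E (2*i - 1) + sin (b (i - 1) * t) *\<^sub>R E (2*i)))"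
      by (simp add: Exp \<eta>_def)
  qed
qed

end
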